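(* Let $q$ be a prime power, $\eta\ge0$ an integer, $(\delta_T,\delta_X)\in\mathbb{Z}\times\mathbb{N}$ with $\delta=\delta_T+\eta\delta_X\ge0$. For every monomial $M$ of bidegree $(\delta_T,\delta_X)$, the leading monomial of $\pi_{(\delta_T,\delta_X)}(M)$ with respect to the monomial order $<$ is $\le M$.
   Context: $R=\mathbb{F}_q[T_1,T_2,X_1,X_2]$; the bidegree of $T_1^{c_1}T_2^{c_2}X_1^{d_1}X_2^{d_2}$ is $(c_1+c_2-\eta d_1,d_1+d_2)$; $R(\delta_T,\delta_X)$ is the span of monomials of that bidegree. Monomial order: $T_1^{c'_1}T_2^{c'_2}X_1^{d'_1}X_2^{d'_2}<T_1^{c_1}T_2^{c_2}X_1^{d_1}X_2^{d_2}$ iff $d'_1+d'_2<d_1+d_2$, or ($d'_1+d'_2=d_1+d_2$ and $d'_2<d_2$), or ($d'_1=d_1$, $d'_2=d_2$, $c'_2<c_2$), or ($d'_1=d_1$, $d'_2=d_2$, $c'_2=c_2$, $c'_1<c_1$). $\mathcal{P}=\{(a,b)\in\mathbb{N}^2:a\le\delta_X,\eta a+b\le\delta\}$; $M(d_2,c_2)=T_1^{\delta-\eta d_2-c_2}T_2^{c_2}X_1^{\delta_X-d_2}X_2^{d_2}$ for $(d_2,c_2)\in\mathcal{P}$ (these are exactly the monomials of bidegree $(\delta_T,\delta_X)$). $A=\delta_X$ if $\delta_T\ge0$, $A=\delta/\eta$ if $\delta_T<0$. Condition (H): $\eta\ge2$, $\delta_T<0$, $\eta\mid\delta_T$, $q\le\delta_X+\delta_T/\eta$.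 $p:\mathcal{P}\to\mathcal{P}$, $(d_2,c_2)\mapsto(d'_2,c'_2)$: $d'_2=d_2$ if $d_2\in\{0,A\}$, otherwise $d'_2\in\{1,\dots,q-1\}$ with $d'_2\equiv d_2\pmod{q-1}$; $c'_2=0$ if $c_2=0$; $c'_2=\delta-\eta d'_2$ if $c_2=\delta-\eta d_2$; otherwise $c'_2\in\{1,\dots,q-1\}$ with $c'_2\equiv c_2\pmod{q-1}$. The linear map $\pi_{(\delta_T,\delta_X)}$ on $R(\delta_T,\delta_X)$ is $\pi(M(d_2,c_2))=M(p(d_2,c_2))$, except when (H) holds and $(d_2,c_2)=(\delta/\eta,0)$: then with $\delta/\eta=k(q-1)+r$, $k\in\mathbb{N}$, $r\in\{1,\dots,q-1\}$, $\pi(M(\delta/\eta,0))=M(r,0)+M(r,\eta k(q-1))-M(r,q-1)$. *)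

theory Defs
  imports Main
begin

text \<open>A monomial T1^c1 T2^c2 X1^d1 X2^d2 is encoded as the exponent tuple (c1, c2, d1, d2).
A polynomial in R = F_q[T1,T2,X1,X2] is encoded by its coefficient function
(finitely supported in all uses below).\<close>

type_synonym mono = "nat \<times> nat \<times> nat \<times> nat"

definition bideg :: "nat \<Rightarrow> mono \<Rightarrow> int \<times> nat" where
  "bideg eta m = (case m of (c1, c2, d1, d2) \<Rightarrow>
     (int c1 + int c2 - int eta * int d1, d1 + d2))"

definition mono_less :: "mono \<Rightarrow> mono \<Rightarrow> bool" where
  "mono_less m' m = (case m' of (c1', c2', d1', d2') \<Rightarrow> case m of (c1, c2, d1, d2) \<Rightarrow>
     d1' + d2' < d1 + d2
     \<or> (d1' + d2' = d1 + d2 \<and> d2' < d2)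
     \<or> (d1' = d1 \<and> d2' = d2 \<and> c2' < c2)
     \<or> (d1' = d1 \<and> d2' = d2 \<and> c2' = c2 \<and> c1' < c1))"

definition mono_le :: "mono \<Rightarrow> mono \<Rightarrow> bool" where
  "mono_le m' m = (m' = m \<or> mono_less m' m)"

definition lead_mono :: "(mono \<Rightarrow> 'a::zero) \<Rightarrow> mono" where
  "lead_mono p = (THE m. p m \<noteq> 0 \<and> (\<forall>m'. p m' \<noteq> 0 \<longrightarrow> mono_le m' m))"

definition mono_poly :: "mono \<Rightarrow> mono \<Rightarrow> 'a::{zero,one}" where
  "mono_poly m = (\<lambda>x. if x = m then 1 else 0)"

definition Mon :: "nat \<Rightarrow> int \<Rightarrow> nat \<Rightarrow> nat \<times> nat \<Rightarrow> mono" where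
  "Mon eta dT dX dc = (case dc of (d2, c2) \<Rightarrow>
     (nat (dT + int eta * int dX - int eta * int d2 - int c2), c2, dX - d2, d2))"

definition condH :: "nat \<Rightarrow> nat \<Rightarrow> int \<Rightarrow> nat \<Rightarrow> bool" where
  "condH q eta dT dX = (eta \<ge> 2 \<and> dT < 0 \<and> int eta dvd dT \<and> int q \<le> int dX + dT div int eta)"

text \<open>d2 = A, where A = dX if dT >= 0 and A = delta/eta (a rational number) if dT < 0.\<close>
definition is_A :: "nat \<Rightarrow> int \<Rightarrow> nat \<Rightarrow> nat \<Rightarrow> bool" where
  "is_A eta dT dX d2 = ((dT \<ge> 0 \<and> d2 = dX) \<or>
     (dT < 0 \<and> int eta * int d2 = dT + int eta * int dX))"

text \<open>For n >= 1: the unique element of {1,...,q-1} congruent to n modulo q-1.\<close>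
definition red :: "nat \<Rightarrow> nat \<Rightarrow> nat" where
  "red q n = (n - 1) mod (q - 1) + 1"

definition pmap :: "nat \<Rightarrow> nat \<Rightarrow> int \<Rightarrow> nat \<Rightarrow> nat \<times> nat \<Rightarrow> nat \<times> nat" where
  "pmap q eta dT dX dc = (case dc of (d2, c2) \<Rightarrow>
     (let delta = dT + int eta * int dX;
          d2' = (if d2 = 0 \<or> is_A eta dT dX d2 then d2 else red q d2);
          c2' = (if c2 = 0 then 0
                 else if int c2 = delta - int eta * int d2 then nat (delta - int eta * int d2')
                 else red q c2)
      in (d2', c2')))"

definition pi_mon :: "nat \<Rightarrow> nat \<Rightarrow> int \<Rightarrow> nat \<Rightarrow> mono \<Rightarrow> mono \<Rightarrow> 'a::ring_1" where
  "pi_mon q eta dT dX m = (case m of (c1, c2, d1, d2) \<Rightarrow>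
     (let delta = dT + int eta * int dX in
      if condH q eta dT dX \<and> int eta * int d2 = delta \<and> c2 = 0 then
        (let r = red q d2; k = (d2 - r) div (q - 1) in
         (\<lambda>x. mono_poly (Mon eta dT dX (r, 0)) x
              + mono_poly (Mon eta dT dX (r, eta * k * (q - 1))) x
              - mono_poly (Mon eta dT dX (r, q - 1)) x))
      else mono_poly (Mon eta dT dX (pmap q eta dT dX (d2, c2)))))"

end

theory Submission
  imports Defs
begin

lemma mono_le_antisym: "mono_le a b \<Longrightarrow> mono_le b a \<Longrightarrow> a = b"
  by (cases a; cases b) (auto simp: mono_le_def mono_less_def)

lemma lead_mono_eqI:
  assumes "p m \<noteq> 0" "\<And>m'. p m' \<noteq> 0 \<Longrightarrow> mono_le m' m"
  shows "lead_mono p = m"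
  unfolding lead_mono_def
  by (rule the_equality) (use assms mono_le_antisym in blast)+

lemma red_le: "1 \<le> n \<Longrightarrow> red q n \<le> n"
proof -
  assume "1 \<le> n"
  have "(n - 1) mod (q - 1) \<le> n - 1" by (rule mod_less_eq_dividend)
  thus ?thesis using \<open>1 \<le> n\<close> unfolding red_def by linarith
qed

lemma card_field_ge2: "card (UNIV :: 'a::{finite,field} set) \<ge> 2"
proof -
  have "card {0::'a, 1} \<le> card (UNIV :: 'a set)" by (rule card_mono) auto
  thus ?thesis by simp
qed

theorem lemma3p5:
  fixes eta :: nat and dT :: int and dX :: nat and M :: mono
  assumes "dT + int eta * int dX \<ge> 0"
    and "bideg eta M = (dT, dX)"
  shows "mono_le (lead_mono (pi_mon (card (UNIV :: 'a set)) eta dT dX M :: mono \<Rightarrow> 'a::{finite,field})) M"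
proof -
  define q where "q = card (UNIV :: 'a set)"
  have q2: "q \<ge> 2" unfolding q_def by (rule card_field_ge2)
  obtain c1 c2 d1 d2 where M: "M = (c1, c2, d1, d2)" by (cases M) auto
  have b1: "int c1 + int c2 - int eta * int d1 = dT" and b2: "d1 + d2 = dX"
    using assms(2) unfolding M bideg_def by auto
  define delta where "delta = dT + int eta * int dX"
  show ?thesis
  proof (cases "condH q eta dT dX \<and> int eta * int d2 = delta \<and> c2 = 0")
    case True
    then have H: "condH q eta dT dX" and e: "int eta * int d2 = delta" and c0: "c2 = 0" by auto
    from H have eta2: "eta \<ge> 2" and dTn: "dT < 0" and dv: "int eta dvd dT"
      and qle: "int q \<le> int dX + dT div int eta" unfolding condH_def by auto
    have "int eta * int d2 = int eta * (int dX + dT div int eta)"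
      using e dv unfolding delta_def by (simp add: algebra_simps)
    then have d2eq: "int d2 = int dX + dT div int eta" using eta2 by simp
    have dTdiv: "dT div int eta < 0" using dTn eta2
      by (simp add: div_neg_pos_less0)
    have d2q: "d2 \<ge> q" using d2eq qle by linarith
    have d2X: "d2 \<le> dX" using d2eq dTdiv by linarith
    define r where "r = red q d2"
    define k where "k = (d2 - r) div (q - 1)"
    have rlt: "r < d2"
    proof -
      have "(d2 - 1) mod (q - 1) < q - 1" using q2 by simp
      thus ?thesis unfolding r_def red_def using d2q q2 by linarith
    qed
    define a where "a = Mon eta dT dX (r, 0)"
    define b where "b = Mon eta dT dX (r, eta * k * (q - 1))"
    define c where "c = Mon eta dT dX (r, q - 1)"
    have pi: "(pi_mon q eta dT dX M :: mono \<Rightarrow> 'a) =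
       (\<lambda>x. mono_poly a x + mono_poly b x - mono_poly c x)"
      unfolding pi_mon_def M using True
      by (simp add: Let_def delta_def a_def b_def c_def r_def k_def)
    have less: "mono_less (Mon eta dT dX (r, x)) M" for x
      using rlt d2X b2 unfolding M Mon_def mono_less_def by auto
    have ac: "a \<noteq> c" using q2 unfolding a_def c_def Mon_def by auto
    have key: "lead_mono (pi_mon q eta dT dX M :: mono \<Rightarrow> 'a) \<in> {a, b, c}"
    proof (cases "k = 0")
      case True
      have ab: "b = a" unfolding a_def b_def True by simp
      have "lead_mono (pi_mon q eta dT dX M :: mono \<Rightarrow> 'a) = c"
        unfolding pi
      proof (rule lead_mono_eqI)
        show "mono_poly a c + mono_poly b c - mono_poly c c \<noteq> (0::'a)"
          using ac ab by (simp add: mono_poly_def)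
        fix m' assume "mono_poly a m' + mono_poly b m' - mono_poly c m' \<noteq> (0::'a)"
        then have "m' = a \<or> m' = c" using ab by (auto simp: mono_poly_def split: if_splits)
        then show "mono_le m' c"
          using q2 unfolding mono_le_def mono_less_def a_def c_def Mon_def by auto
      qed
      thus ?thesis by simp
    next
      case False
      have gt: "eta * k * (q - 1) > q - 1"
      proof -
        have k1: "1 \<le> k" using False by simp
        have "eta * 1 \<le> eta * k" using k1 by (rule mult_le_mono2)
        then have "eta * k \<ge> 2" using eta2 by linarith
        then have "eta * k * (q - 1) \<ge> 2 * (q - 1)" by simp
        thus ?thesis using q2 by linarith
      qed
      have sb: "fst (snd b) = eta*k*(q-1)" "fst (snd a) = 0" "fst (snd c) = q-1"
        unfolding a_def b_def c_def Mon_def by simp_all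
      have ba: "b \<noteq> a" "b \<noteq> c" using gt sb by force+
      have "lead_mono (pi_mon q eta dT dX M :: mono \<Rightarrow> 'a) = b"
        unfolding pi
      proof (rule lead_mono_eqI)
        show "mono_poly a b + mono_poly b b - mono_poly c b \<noteq> (0::'a)"
          using ba by (simp add: mono_poly_def)
        fix m' assume "mono_poly a m' + mono_poly b m' - mono_poly c m' \<noteq> (0::'a)"
        then have "m' = a \<or> m' = b \<or> m' = c" by (auto simp: mono_poly_def split: if_splits)
        then show "mono_le m' b"
          using gt unfolding mono_le_def mono_less_def a_def b_def c_def Mon_def by auto
      qed
      thus ?thesis by simp
    qed
    have "mono_less (lead_mono (pi_mon q eta dT dX M :: mono \<Rightarrow> 'a)) M"
      using key less unfolding a_def b_def c_def by auto
    thus ?thesis unfolding q_def mono_le_def by simp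
  next
    case False
    obtain d2' c2' where pm: "pmap q eta dT dX (d2, c2) = (d2', c2')" by fastforce
    have pi: "(pi_mon q eta dT dX M :: mono \<Rightarrow> 'a) = mono_poly (Mon eta dT dX (d2', c2'))"
    proof -
      have nH: "\<not> (condH q eta dT dX \<and> int eta * int d2 = dT + int eta * int dX \<and> c2 = 0)"
        using False unfolding delta_def by simp
      show ?thesis unfolding pi_mon_def M Let_def prod.case if_not_P[OF nH] pm by simp
    qed
    have lm: "lead_mono (pi_mon q eta dT dX M :: mono \<Rightarrow> 'a) = Mon eta dT dX (d2', c2')"
      unfolding pi by (rule lead_mono_eqI) (auto simp: mono_poly_def mono_le_def split: if_splits)
    have d2': "d2' = (if d2 = 0 \<or> is_A eta dT dX d2 then d2 else red q d2)"
      and c2': "c2' = (if c2 = 0 then 0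
                 else if int c2 = delta - int eta * int d2 then nat (delta - int eta * int d2')
                 else red q c2)"
      using pm unfolding pmap_def delta_def by (auto simp: Let_def)
    have d2le: "d2' \<le> d2" using d2' red_le[of d2 q] by auto
    have "mono_le (Mon eta dT dX (d2', c2')) M"
    proof (cases "d2' < d2")
      case True
      thus ?thesis using b2 unfolding M Mon_def mono_le_def mono_less_def by auto
    next
      case False
      then have dd: "d2' = d2" using d2le by simp
      have c1e: "int c1 = delta - int eta * int d2 - int c2"
        using b1 b2 unfolding delta_def by (auto simp: algebra_simps of_nat_diff)
      have "c2' \<le> c2" using c2' red_le[of c2 q] dd c1e by auto
      moreover have "c2' = c2 \<Longrightarrow> Mon eta dT dX (d2', c2') = M"
      proof -
        have "dT + int eta * int dX - int eta * int d2 - int c2 = int c1"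
          using c1e unfolding delta_def by simp
        moreover have "dX - d2 = d1" using b2 by simp
        moreover assume "c2' = c2"
        ultimately show ?thesis unfolding M Mon_def dd by simp
      qed
      ultimately show ?thesis
        using dd b2 unfolding M Mon_def mono_le_def mono_less_def by fastforce
    qed
    thus ?thesis using lm unfolding q_def by simp
  qed
qed

end
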